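(* Let $p$ be a prime and $1\le e<p$. For all but finitely many integers $n\ge1$ there exists $c\in\overline{\mathbb{F}_p}$ such that the correspondence $C_c:y^e=x^p+c$ over $\overline{\mathbb{F}_p}$ admits a sequence $x_0=0,x_1,\dots,x_n=0$ with $(x_i,x_{i+1})\in C_c$ for $0\le i<n$, but admits no sequence $x_0=0,x_1,\dots,x_m=0$ with $(x_i,x_{i+1})\in C_c$ for $0\le i<m$ and $1\le m<n$.
   Context: $C_c=\{(a,b)\in\overline{\mathbb{F}_p}^2: b^e=a^p+c\}$. *)

theory Defs
  imports "Berlekamp_Zassenhaus.Finite_Field" "HOL-Algebra.Algebraic_Closure_Type"
begin

definition corr :: "nat \<Rightarrow> nat \<Rightarrow> 'a::comm_ring_1 \<Rightarrow> ('a \<times> 'a) set" where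
  "corr p e c = {(a, b). b ^ e = a ^ p + c}"

definition zero_cycle :: "('a::zero \<times> 'a) set \<Rightarrow> nat \<Rightarrow> bool" where
  "zero_cycle C n \<longleftrightarrow> (\<exists>x :: nat \<Rightarrow> 'a. x 0 = 0 \<and> x n = 0 \<and> (\<forall>i<n. (x i, x (Suc i)) \<in> C))"

end

theory Submission imports Defs begin

lemma frob_add:
  fixes x y :: "'a::comm_ring_1"
  assumes "Factorial_Ring.prime CHAR('a)"
  shows "(x+y)^CHAR('a) = x^CHAR('a) + y^CHAR('a)"
proof -
  let ?p = "CHAR('a)"
  have p0: "?p \<noteq> 0" using assms by auto
  have "(x+y)^?p = (\<Sum>k\<le>?p. of_nat (?p choose k) * x^k * y^(?p-k))" by (rule binomial_ring)
  also have "\<dots> = (\<Sum>k\<in>{0,?p}. of_nat (?p choose k) * x^k * y^(?p-k))"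
  proof (rule sum.mono_neutral_right)
    show "\<forall>i\<in>{..?p} - {0, ?p}. of_nat (?p choose i) * x ^ i * y ^ (?p - i) = 0"
    proof
      fix i assume i: "i \<in> {..?p} - {0, ?p}"
      have "?p dvd (?p choose i)" by (rule dvd_choose_prime) (use i assms in auto)
      hence "of_nat (?p choose i) = (0::'a)" by (simp add: of_nat_eq_0_iff_char_dvd)
      thus "of_nat (?p choose i) * x ^ i * y ^ (?p - i) = 0" by simp
    qed
  qed auto
  also have "\<dots> = x^?p + y^?p" using p0 by simp
  finally show ?thesis .
qed

lemma frob_add_pow:
  fixes x y :: "'a::comm_ring_1"
  assumes "Factorial_Ring.prime CHAR('a)"
  shows "(x+y)^(CHAR('a)^k) = x^(CHAR('a)^k) + y^(CHAR('a)^k)"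
proof (induction k)
  case (Suc k)
  have "(x+y)^(CHAR('a)^Suc k) = ((x+y)^(CHAR('a)^k))^CHAR('a)"
    by (simp add: power_mult[symmetric] mult.commute)
  also have "\<dots> = (x^(CHAR('a)^k))^CHAR('a) + (y^(CHAR('a)^k))^CHAR('a)"
    using Suc frob_add[OF assms] by simp
  also have "\<dots> = x^(CHAR('a)^Suc k) + y^(CHAR('a)^Suc k)"
    by (simp add: power_mult[symmetric] mult.commute)
  finally show ?case .
qed simp

lemma frob_diff_pow:
  fixes x y :: "'a::comm_ring_1"
  assumes "Factorial_Ring.prime CHAR('a)"
  shows "(x-y)^(CHAR('a)^k) = x^(CHAR('a)^k) - y^(CHAR('a)^k)"
  using frob_add_pow[OF assms, of "x-y" y k] by (simp add: algebra_simps)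

lemma frob_inj_pow:
  fixes x y :: "'a::idom"
  assumes "Factorial_Ring.prime CHAR('a)" "x^(CHAR('a)^k) = y^(CHAR('a)^k)"
  shows "x = y"
proof -
  have "(x-y)^(CHAR('a)^k) = 0" using frob_diff_pow[OF assms(1)] assms(2) by simp
  thus ?thesis by simp
qed

fun Hp :: "nat \<Rightarrow> nat \<Rightarrow> 'a::comm_ring_1 poly" where
  "Hp e 0 = 0"
| "Hp e (Suc k) = Hp e k ^ e - monom 1 (CHAR('a)^k)"

lemma poly_Hp_Suc: "poly (Hp e (Suc k)) c = poly (Hp e k) c ^ e - c^(CHAR('a)^k)"
  for c :: "'a::comm_ring_1"
  by (simp add: poly_monom)

lemma cycle_imp_Hp:
  fixes x :: "nat \<Rightarrow> 'a::comm_ring_1"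
  assumes pr: "Factorial_Ring.prime CHAR('a)" and e: "1 \<le> e" and xm: "x m = 0"
    and rel: "\<forall>i<m. x (Suc i)^e = x i^CHAR('a) + c"
  shows "k \<le> m \<Longrightarrow> x (m-k)^(CHAR('a)^k) = poly (Hp e k) c"
proof (induction k)
  case 0 then show ?case using xm by simp
next
  case (Suc k)
  let ?p = "CHAR('a)"
  define i where "i = m - Suc k"
  have si: "Suc i = m - k" "i < m" using Suc.prems by (auto simp: i_def)
  have r: "x i ^ ?p = x (m-k)^e - c" using rel si by (metis add_diff_cancel_right')
  have "x (m - Suc k)^(?p^Suc k) = (x i ^ ?p)^(?p^k)" by (simp add: i_def power_mult)
  also have "\<dots> = (x (m-k)^e)^(?p^k) - c^(?p^k)" using r frob_diff_pow[OF pr] by simp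
  also have "\<dots> = (x (m-k)^(?p^k))^e - c^(?p^k)" by (simp add: power_mult[symmetric] mult.commute)
  also have "\<dots> = poly (Hp e (Suc k)) c" using Suc by (simp add: poly_Hp_Suc del: Hp.simps)
  finally show ?case .
qed

lemma zero_cycle_imp_Hp:
  fixes c :: "'a::idom"
  assumes pr: "Factorial_Ring.prime CHAR('a)" and e: "1 \<le> e" and z: "zero_cycle (corr CHAR('a) e c) m"
  shows "poly (Hp e m) c = 0"
proof -
  obtain x :: "nat \<Rightarrow> 'a" where x: "x 0 = 0" "x m = 0" "\<forall>i<m. (x i, x (Suc i)) \<in> corr CHAR('a) e c"
    using z unfolding zero_cycle_def by blast
  have "x (m-m)^(CHAR('a)^m) = poly (Hp e m) c"
    by (rule cycle_imp_Hp[where x=x and m=m and k=m, OF pr e x(2)]) (use x(3) in \<open>auto simp: corr_def\<close>)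
  moreover have "CHAR('a)^m \<noteq> 0" using pr by (simp add: prime_gt_0_nat)
  ultimately show ?thesis using x(1) by (simp add: zero_power)
qed

lemma Hp_imp_zero_cycle:
  fixes c :: "'a::alg_closed_field"
  assumes pr: "Factorial_Ring.prime CHAR('a)" and e: "1 \<le> e" and h: "poly (Hp e n) c = 0"
  shows "zero_cycle (corr CHAR('a) e c) n"
proof -
  let ?p = "CHAR('a)"
  have "\<forall>k. \<exists>y. y ^ (?p^k) = poly (Hp e k) c"
    using pr by (intro allI nth_root_exists) (simp add: prime_gt_0_nat)
  then obtain y where y: "\<And>k. y k ^ (?p^k) = poly (Hp e k) c" by metis
  define x where "x i = y (n - i)" for i
  have "x 0 = 0"
  proof -
    have "y n ^ (?p^n) = 0" using y[of n] h by simp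
    thus ?thesis using x_def by simp
  qed
  moreover have "x n = 0" using y[of 0] by (simp add: x_def)
  moreover have "(x i, x (Suc i)) \<in> corr ?p e c" if i: "i < n" for i
  proof -
    define k where "k = n - Suc i"
    have xi: "x i = y (Suc k)" "x (Suc i) = y k" using i by (auto simp: x_def k_def Suc_diff_Suc)
    have "(y (Suc k) ^ ?p)^(?p^k) = (y k ^ e - c)^(?p^k)"
    proof -
      have "(y (Suc k) ^ ?p)^(?p^k) = poly (Hp e (Suc k)) c"
        using y[of "Suc k"] by (simp add: power_mult[symmetric] mult.commute)
      also have "\<dots> = (y k ^ (?p^k))^e - c^(?p^k)" using y[of k] by (simp add: poly_Hp_Suc del: Hp.simps)
      also have "\<dots> = (y k ^ e)^(?p^k) - c^(?p^k)" by (simp add: power_mult[symmetric] mult.commute)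
      also have "\<dots> = (y k ^ e - c)^(?p^k)" using frob_diff_pow[OF pr] by simp
      finally show ?thesis .
    qed
    hence "y (Suc k) ^ ?p = y k ^ e - c" by (rule frob_inj_pow[OF pr])
    thus ?thesis using xi by (simp add: corr_def)
  qed
  ultimately show ?thesis unfolding zero_cycle_def by blast
qed

hide_const (open) Polynomials.degree

lemma size_proots_alg_closed:
  fixes p :: "'a::alg_closed_field poly"
  assumes "p \<noteq> 0"
  shows "size (proots p) = degree p"
  using assms
proof (induction "degree p" arbitrary: p rule: less_induct)
  case (less p)
  show ?case
  proof (cases "degree p = 0")
    case True
    then obtain a where "p = [:a:]" by (elim degree_eq_zeroE)
    thus ?thesis by simp
  next
    case False
    then obtain x where x: "poly p x = 0" using alg_closed_imp_poly_has_root by blast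
    hence "[:-x, 1:] dvd p" using poly_eq_0_iff_dvd by blast
    then obtain q where p_eq: "p = [:-x, 1:] * q" by (elim dvdE)
    have q0: "q \<noteq> 0" using less.prems p_eq by auto
    have deg: "degree p = Suc (degree q)" unfolding p_eq using q0 by (subst degree_mult_eq) auto
    have "size (proots q) = degree q" using less.hyps[of q] deg q0 by auto
    moreover have "proots p = proots [:-x,1:] + proots q" unfolding p_eq using q0 by (intro proots_mult) auto
    moreover have "proots [:-x,1:] = {#x#}" using proots_linear_factor[of "-x"] by simp
    ultimately show ?thesis using deg by simp
  qed
qed

lemma order_le_pderiv:
  fixes f :: "'a::idom poly"
  assumes "pderiv f \<noteq> 0"
  shows "order a f \<le> Suc (order a (pderiv f))"
proof (cases "order a f")
  case 0 then show ?thesis by simp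
next
  case (Suc k)
  have "[:-a,1:]^order a f dvd f" by (rule order_1)
  then obtain g where g: "f = [:-a,1:]^Suc k * g" using Suc by (elim dvdE) auto
  have "pderiv f = [:- a, 1:] ^ Suc k * pderiv g + smult (of_nat (Suc k)) (g * [:- a, 1:] ^ k)"
    unfolding g by (rule lemma_order_pderiv1)
  hence "[:-a,1:]^k dvd pderiv f"
    by (metis dvd_add dvd_mult2 dvd_smult dvd_triv_right le_imp_power_dvd le_SucI order_refl)
  hence "k \<le> order a (pderiv f)" using assms order_divides by blast
  thus ?thesis using Suc by simp
qed

lemma roots_lower:
  fixes f :: "'a::alg_closed_field poly"
  assumes f0: "f \<noteq> 0" and d0: "pderiv f \<noteq> 0"
  shows "degree f \<le> card {x. poly f x = 0} + degree (pderiv f)"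
proof -
  let ?R = "{x. poly f x = 0}"
  have fin: "finite ?R" using f0 by (rule poly_roots_finite)
  have "degree f = size (proots f)" using f0 by (simp add: size_proots_alg_closed)
  also have "\<dots> = (\<Sum>x\<in>?R. order x f)"
    using f0 by (simp add: size_multiset_overloaded_eq)
  also have "\<dots> \<le> (\<Sum>x\<in>?R. 1 + order x (pderiv f))"
    by (intro sum_mono) (use order_le_pderiv[OF d0] in auto)
  also have "\<dots> = card ?R + (\<Sum>x\<in>?R. order x (pderiv f))"
    by (simp add: sum_Suc)
  also have "(\<Sum>x\<in>?R. order x (pderiv f)) \<le> (\<Sum>x | poly (pderiv f) x = 0. order x (pderiv f))"
  proof -
    have "(\<Sum>x\<in>?R. order x (pderiv f)) = (\<Sum>x\<in>?R \<inter> {x. poly (pderiv f) x = 0}. order x (pderiv f))"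
      by (rule sum.mono_neutral_right) (use fin d0 in \<open>auto simp: order_0I\<close>)
    also have "\<dots> \<le> (\<Sum>x | poly (pderiv f) x = 0. order x (pderiv f))"
      by (rule sum_mono2) (use d0 poly_roots_finite in auto)
    finally show ?thesis .
  qed
  also have "\<dots> \<le> degree (pderiv f)" using d0 by (rule sum_order_le_degree)
  finally show ?thesis by simp
qed


definition Ssum :: "nat \<Rightarrow> nat \<Rightarrow> nat" where
  "Ssum q n = (\<Sum>m\<in>{1..<n}. q^(m-1))"

lemma Ssum_Suc: "1 \<le> n \<Longrightarrow> Ssum q (Suc n) = Ssum q n + q^(n-1)"
  unfolding Ssum_def by (simp add: sum.atLeastLessThan_Suc)

lemma Ssum_geom: assumes q: "1 \<le> q" and n: "1 \<le> n" shows "(q-1) * Ssum q n + 1 = q^(n-1)"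
  using n
proof (induction n rule: nat_induct_at_least)
  case base then show ?case by (simp add: Ssum_def)
next
  case (Suc n)
  obtain r where r: "q = Suc r" using q by (cases q) auto
  have "(q-1) * Ssum q (Suc n) + 1 = ((q-1) * Ssum q n + 1) + (q-1)*q^(n-1)"
    using Suc.hyps by (simp add: Ssum_Suc algebra_simps)
  also have "\<dots> = q^(n-1) + r * q^(n-1)" using Suc.IH r by simp
  also have "\<dots> = q^n" using Suc.hyps r by (cases n) auto
  finally show ?case by simp
qed

context
  fixes e :: nat
  assumes pr: "Factorial_Ring.prime CHAR('a::alg_closed_field)"
    and e1: "1 \<le> e" and eq: "e < CHAR('a)"
begin

lemma Hp_deg: "1 \<le> n \<Longrightarrow> (Hp e n :: 'a poly) \<noteq> 0 \<and> degree (Hp e n :: 'a poly) = CHAR('a)^(n-1)"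
proof (induction n rule: nat_induct_at_least)
  case base
  have z: "(0 :: 'a poly)^e = 0" using e1 by (simp add: zero_power)
  show ?case by (simp add: z degree_monom_eq)
next
  case (Suc n)
  let ?q = "CHAR('a)"
  have q1: "?q > 1" using pr prime_gt_1_nat by blast
  have "degree ((Hp e n :: 'a poly) ^ e) = e * ?q^(n-1)"
    using Suc.IH by (simp add: degree_power_eq)
  also have "\<dots> < ?q * ?q^(n-1)" using eq by (simp add: q1)
  also have "\<dots> = ?q^n" using Suc.hyps by (cases n) auto
  finally have lt: "degree ((Hp e n :: 'a poly) ^ e) < degree (- monom (1::'a) (?q^n))"
    by (simp add: degree_monom_eq)
  have eqn: "(Hp e (Suc n) :: 'a poly) = Hp e n ^ e + (- monom 1 (?q^n))" by simp
  have "degree (Hp e (Suc n) :: 'a poly) = ?q^n"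
    unfolding eqn by (subst degree_add_eq_right[OF lt]) (simp add: degree_monom_eq)
  moreover have "?q^n > 0" using q1 by simp
  ultimately show ?case by (auto simp del: Hp.simps)
qed

lemma of_nat_e_nz: "(of_nat e :: 'a) \<noteq> 0"
proof
  assume "(of_nat e :: 'a) = 0"
  hence "CHAR('a) dvd e" by (simp add: of_nat_eq_0_iff_char_dvd)
  thus False using e1 eq by (auto dest: dvd_imp_le)
qed

lemma Hp_pderiv: "1 \<le> n \<Longrightarrow> pderiv (Hp e n :: 'a poly) \<noteq> 0 \<and>
    degree (pderiv (Hp e n :: 'a poly)) \<le> (e-1) * Ssum CHAR('a) n"
proof (induction n rule: nat_induct_at_least)
  case base
  have z: "(0 :: 'a poly)^e = 0" using e1 by (simp add: zero_power)
  show ?case by (simp add: z pderiv_minus pderiv_monom Ssum_def)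
next
  case (Suc n)
  let ?q = "CHAR('a)"
  let ?H = "Hp e n :: 'a poly"
  have H0: "?H \<noteq> 0" and Hd: "degree ?H = ?q^(n-1)" using Hp_deg Suc.hyps by auto
  have "(of_nat (?q^n) :: 'a) = 0" using Suc.hyps by (simp add: of_nat_eq_0_iff_char_dvd)
  hence pm: "pderiv (monom (1::'a) (?q^n)) = 0" by (simp add: pderiv_monom)
  have pd: "pderiv (Hp e (Suc n) :: 'a poly) = smult (of_nat e) (?H ^ (e-1) * pderiv ?H)"
    by (simp add: pderiv_diff pm pderiv_power)
  have nz: "?H ^ (e-1) * pderiv ?H \<noteq> 0" using H0 Suc.IH by simp
  have "degree (pderiv (Hp e (Suc n) :: 'a poly)) = (e-1) * ?q^(n-1) + degree (pderiv ?H)"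
    unfolding pd using of_nat_e_nz H0 Suc.IH by (simp add: degree_mult_eq degree_power_eq Hd)
  also have "\<dots> \<le> (e-1) * ?q^(n-1) + (e-1) * Ssum ?q n" using Suc.IH by simp
  also have "\<dots> = (e-1) * Ssum ?q (Suc n)" using Suc.hyps by (simp add: Ssum_Suc algebra_simps)
  finally show ?case using pd nz of_nat_e_nz by simp
qed

lemma exists_exact:
  assumes n1: "1 \<le> n"
  shows "\<exists>c::'a. poly (Hp e n) c = 0 \<and> (\<forall>m. 1 \<le> m \<and> m < n \<longrightarrow> poly (Hp e m) c \<noteq> 0)"
proof -
  let ?q = "CHAR('a)"
  define R where "R m = {c::'a. poly (Hp e m) c = 0}" for m
  define Bd where "Bd = (\<Union>m\<in>{1..<n}. R m)"
  have q1: "?q > 1" using pr prime_gt_1_nat by blast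
  have cardR: "card (R m) \<le> ?q^(m-1)" if "1 \<le> m" for m
    using card_poly_roots_bound[of "Hp e m :: 'a poly"] Hp_deg[OF that] by (simp add: R_def)
  have finR: "finite (R m)" if "1 \<le> m" for m
    using poly_roots_finite[of "Hp e m :: 'a poly"] Hp_deg[OF that] by (simp add: R_def)
  have finB: "finite Bd" unfolding Bd_def using finR by auto
  have "card Bd \<le> (\<Sum>m\<in>{1..<n}. card (R m))" unfolding Bd_def by (rule card_UN_le) simp
  also have "\<dots> \<le> (\<Sum>m\<in>{1..<n}. ?q^(m-1))" by (rule sum_mono) (use cardR in auto)
  finally have cB: "card Bd \<le> Ssum ?q n" by (simp add: Ssum_def)
  have "?q^(n-1) \<le> card (R n) + (e-1) * Ssum ?q n"
    using roots_lower[of "Hp e n :: 'a poly"] Hp_deg[OF n1] Hp_pderiv[OF n1] by (simp add: R_def)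
  moreover have "(?q-1) * Ssum ?q n + 1 = ?q^(n-1)" using Ssum_geom q1 n1 by simp
  moreover have "e - 1 \<le> ?q - 2" using eq e1 by simp
  ultimately have "card (R n) \<ge> Ssum ?q n + 1"
  proof -
    assume a: "?q^(n-1) \<le> card (R n) + (e-1) * Ssum ?q n"
       "(?q-1) * Ssum ?q n + 1 = ?q^(n-1)" "e - 1 \<le> ?q - 2"
    have "(e-1) * Ssum ?q n \<le> (?q-2) * Ssum ?q n" using a(3) by (rule mult_right_mono) simp
    moreover have "(?q-1) * Ssum ?q n = (?q-2) * Ssum ?q n + Ssum ?q n"
      using q1 by (simp add: algebra_simps flip: add_mult_distrib)
    ultimately show ?thesis using a(1,2) by linarith
  qed
  hence gt: "card Bd < card (R n)" using cB by linarith
  have "\<not> R n \<subseteq> Bd"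
  proof
    assume "R n \<subseteq> Bd"
    hence "card (R n) \<le> card Bd" by (rule card_mono[OF finB])
    thus False using gt by linarith
  qed
  then obtain c where "c \<in> R n" "c \<notin> Bd" by blast
  thus ?thesis by (auto simp: R_def Bd_def)
qed

end

theorem theorem5p1:
  fixes e :: nat
  assumes "1 \<le> e" and "e < CARD('p::prime_card)"
  shows "finite {n::nat. 1 \<le> n \<and>
           \<not> (\<exists>c :: 'p mod_ring alg_closure.
                 zero_cycle (corr CARD('p) e c) n \<and>
                 (\<forall>m. 1 \<le> m \<and> m < n \<longrightarrow> \<not> zero_cycle (corr CARD('p) e c) m))}"
proof -
  have CH: "CHAR('p mod_ring alg_closure) = CARD('p)" by simp
  have pr: "Factorial_Ring.prime CHAR('p mod_ring alg_closure)" using CH prime_card by simp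
  have eq: "e < CHAR('p mod_ring alg_closure)" using CH assms(2) by simp
  have "{n::nat. 1 \<le> n \<and>
           \<not> (\<exists>c :: 'p mod_ring alg_closure.
                 zero_cycle (corr CARD('p) e c) n \<and>
                 (\<forall>m. 1 \<le> m \<and> m < n \<longrightarrow> \<not> zero_cycle (corr CARD('p) e c) m))} = {}"
  proof (rule ccontr)
    assume "{n::nat. 1 \<le> n \<and>
           \<not> (\<exists>c :: 'p mod_ring alg_closure.
                 zero_cycle (corr CARD('p) e c) n \<and>
                 (\<forall>m. 1 \<le> m \<and> m < n \<longrightarrow> \<not> zero_cycle (corr CARD('p) e c) m))} \<noteq> {}"
    then obtain n where n1: "1 \<le> n" and nn: "\<not> (\<exists>c :: 'p mod_ring alg_closure.
                 zero_cycle (corr CARD('p) e c) n \<and>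
                 (\<forall>m. 1 \<le> m \<and> m < n \<longrightarrow> \<not> zero_cycle (corr CARD('p) e c) m))" by blast
    obtain c :: "'p mod_ring alg_closure" where c: "poly (Hp e n) c = 0"
      "\<forall>m. 1 \<le> m \<and> m < n \<longrightarrow> poly (Hp e m) c \<noteq> 0"
      using exists_exact[OF pr assms(1) eq n1] by blast
    have "zero_cycle (corr CARD('p) e c) n"
      using Hp_imp_zero_cycle[OF pr assms(1) c(1)] CH by simp
    moreover have "\<forall>m. 1 \<le> m \<and> m < n \<longrightarrow> \<not> zero_cycle (corr CARD('p) e c) m"
      using zero_cycle_imp_Hp[OF pr assms(1), of c] c(2) CH by auto
    ultimately show False using nn by blast
  qed
  thus ?thesis by (metis finite.emptyI)
qed

end
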